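(* Let $A,B,C$ be complex vector spaces with $\dim A\le \dim B=\dim C=\mathbf{b}$. Let $T\in A\otimes B\otimes C$ be a concise tensor such that the space $T(A^* )\subset B\otimes C$ has bounded rank $\mathbf{b}-1$ and is primitive. Then $T$ does not have border rank $\mathbf{b}$.
   Context: $T(A^* )$ is the image of the contraction $T_A:A^*\to B\otimes C$, a space of linear maps $B^*\to C$; write $\varphi(\alpha):B^*\to C$ for the map given by $\alpha\in A^*$. It has bounded rank $r$ if the maximal rank of its elements is $r<\min\{\dim B,\dim C\}$. $T$ is concise if the three induced maps $A^*\to B\otimes C$, $B^*\to A\otimes C$, $C^*\to A\otimes B$ are injective. A space $T(A^* )$ of bounded rank $r$ is imprimitive if there is a hyperplane $H\subset B^*$ such that all restrictions $\varphi(\alpha)|_H$ have rank $\le r-1$, or a hyperplane $H\subset C^*$ such that all restrictions $\varphi(\alpha)^{\mathbf t}|_H$ have rank $\le r-1$; otherwise it is primitive. Border rank of $T$: the smallest $s$ such that $T$ is a limit of sums of $s$ tensors of the form $a\otimes b\otimes c$. *)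

theory Defs
  imports Complex_Main "HOL-Library.Function_Algebras" "HOL-Library.Cardinality"
begin

text \<open>Finite-dimensional complex vector spaces are modelled as function spaces
  over finite index types: A = ('a => complex), etc.  A tensor in A (x) B (x) C is a
  function 'a => 'b => 'c => complex (its coordinate array).  The dual space A*
  is likewise identified with ('a => complex) via the dual basis.\<close>

definition cscale :: "complex \<Rightarrow> ('i \<Rightarrow> complex) \<Rightarrow> ('i \<Rightarrow> complex)" where
  "cscale c v = (\<lambda>x. c * v x)"

lemma vector_space_cscale: "vector_space (cscale :: complex \<Rightarrow> ('i \<Rightarrow> complex) \<Rightarrow> _)"
  by unfold_locales (auto simp: cscale_def fun_eq_iff algebra_simps)

definition cdim :: "('i \<Rightarrow> complex) set \<Rightarrow> nat" where
  "cdim V = vector_space.dim cscale V"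

definition csubspace :: "('i \<Rightarrow> complex) set \<Rightarrow> bool" where
  "csubspace V = module.subspace cscale V"

definition hyperplane :: "('i::finite \<Rightarrow> complex) set \<Rightarrow> bool" where
  "hyperplane H \<longleftrightarrow> csubspace H \<and> cdim H = CARD('i) - 1"

type_synonym ('a,'b,'c) tensor = "'a \<Rightarrow> 'b \<Rightarrow> 'c \<Rightarrow> complex"

text \<open>phi(alpha) : B* -> C, the image of alpha under T_A : A* -> B (x) C.\<close>
definition phi :: "('a::finite,'b::finite,'c::finite) tensor \<Rightarrow> ('a \<Rightarrow> complex)
    \<Rightarrow> ('b \<Rightarrow> complex) \<Rightarrow> ('c \<Rightarrow> complex)" where
  "phi T \<alpha> \<beta> = (\<lambda>k. \<Sum>i\<in>UNIV. \<Sum>j\<in>UNIV. \<alpha> i * \<beta> j * T i j k)"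

definition phiT :: "('a::finite,'b::finite,'c::finite) tensor \<Rightarrow> ('a \<Rightarrow> complex)
    \<Rightarrow> ('c \<Rightarrow> complex) \<Rightarrow> ('b \<Rightarrow> complex)" where
  "phiT T \<alpha> \<gamma> = (\<lambda>j. \<Sum>i\<in>UNIV. \<Sum>k\<in>UNIV. \<alpha> i * \<gamma> k * T i j k)"

definition rank_on :: "(('i \<Rightarrow> complex) \<Rightarrow> ('o \<Rightarrow> complex)) \<Rightarrow> ('i \<Rightarrow> complex) set \<Rightarrow> nat" where
  "rank_on f H = cdim (f ` H)"

definition lrank :: "(('i \<Rightarrow> complex) \<Rightarrow> ('o \<Rightarrow> complex)) \<Rightarrow> nat" where
  "lrank f = rank_on f UNIV"

definition concise :: "('a::finite,'b::finite,'c::finite) tensor \<Rightarrow> bool" where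
  "concise T \<longleftrightarrow>
     inj (\<lambda>\<alpha>::'a \<Rightarrow> complex. \<lambda>j k. \<Sum>i\<in>UNIV. \<alpha> i * T i j k) \<and>
     inj (\<lambda>\<beta>::'b \<Rightarrow> complex. \<lambda>i k. \<Sum>j\<in>UNIV. \<beta> j * T i j k) \<and>
     inj (\<lambda>\<gamma>::'c \<Rightarrow> complex. \<lambda>i j. \<Sum>k\<in>UNIV. \<gamma> k * T i j k)"

definition bounded_rank :: "('a::finite,'b::finite,'c::finite) tensor \<Rightarrow> nat \<Rightarrow> bool" where
  "bounded_rank T r \<longleftrightarrow>
     (\<exists>\<alpha>. lrank (phi T \<alpha>) = r) \<and> (\<forall>\<alpha>. lrank (phi T \<alpha>) \<le> r) \<and>
     r < min CARD('b) CARD('c)"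

definition imprimitive :: "('a::finite,'b::finite,'c::finite) tensor \<Rightarrow> nat \<Rightarrow> bool" where
  "imprimitive T r \<longleftrightarrow>
     (\<exists>H :: ('b \<Rightarrow> complex) set. hyperplane H \<and> (\<forall>\<alpha>. rank_on (phi T \<alpha>) H \<le> r - 1)) \<or>
     (\<exists>H :: ('c \<Rightarrow> complex) set. hyperplane H \<and> (\<forall>\<alpha>. rank_on (phiT T \<alpha>) H \<le> r - 1))"

definition primitive_bounded_rank :: "('a::finite,'b::finite,'c::finite) tensor \<Rightarrow> nat \<Rightarrow> bool" where
  "primitive_bounded_rank T r \<longleftrightarrow> bounded_rank T r \<and> \<not> imprimitive T r"

definition sum_rank_one :: "nat \<Rightarrow> (nat \<Rightarrow> 'a \<Rightarrow> complex) \<Rightarrow> (nat \<Rightarrow> 'b \<Rightarrow> complex)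
    \<Rightarrow> (nat \<Rightarrow> 'c \<Rightarrow> complex) \<Rightarrow> ('a,'b,'c) tensor" where
  "sum_rank_one s a b c = (\<lambda>i j k. \<Sum>l<s. a l i * b l j * c l k)"

text \<open>T is a limit (in the Euclidean topology, i.e. coordinatewise) of sums of s rank-one tensors.\<close>
definition border_rank_le :: "('a::finite,'b::finite,'c::finite) tensor \<Rightarrow> nat \<Rightarrow> bool" where
  "border_rank_le T s \<longleftrightarrow>
     (\<exists>a b c. \<forall>i j k. (\<lambda>n. sum_rank_one s (a n) (b n) (c n) i j k) \<longlonglongrightarrow> T i j k)"

definition border_rank :: "('a::finite,'b::finite,'c::finite) tensor \<Rightarrow> nat" where
  "border_rank T = (LEAST s. border_rank_le T s)"

end

theory Submission
  imports Defs "HOL-Analysis.Analysis" "HOL-Computational_Algebra.Polynomial"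
begin


interpretation cs: vector_space "cscale :: complex \<Rightarrow> ('i \<Rightarrow> complex) \<Rightarrow> _"
  by (rule vector_space_cscale)

definition dlt :: "'i \<Rightarrow> 'i \<Rightarrow> complex" where "dlt i = (\<lambda>j. if j = i then 1 else 0)"

lemma cscale_apply[simp]: "cscale c v x = c * v x" by (simp add: cscale_def)

lemma sum_fun_apply: "(sum f S) x = sum (\<lambda>i. f i x) S" for f :: "_ \<Rightarrow> 'i \<Rightarrow> complex"
  by (induct S rule: infinite_finite_induct) auto

lemma fun_expand: "(v::'i::finite \<Rightarrow> complex) = (\<Sum>i\<in>UNIV. cscale (v i) (dlt i))"
proof (rule ext)
  fix x
  have "(\<Sum>i\<in>UNIV. cscale (v i) (dlt i)) x = (\<Sum>i\<in>UNIV. v i * (if x = i then 1 else 0))"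
    by (simp add: sum_fun_apply dlt_def)
  also have "\<dots> = (\<Sum>i\<in>UNIV. if x = i then v i else 0)"
    by (rule sum.cong) auto
  also have "\<dots> = v x" by (simp add: sum.delta)
  finally show "v x = (\<Sum>i\<in>UNIV. cscale (v i) (dlt i)) x" by simp
qed

lemma span_dlt: "cs.span (range dlt) = (UNIV :: ('i::finite \<Rightarrow> complex) set)"
proof -
  { fix v :: "'i \<Rightarrow> complex"
    have "(\<Sum>i\<in>UNIV. cscale (v i) (dlt i)) \<in> cs.span (range dlt)"
      by (intro cs.span_sum cs.span_scale cs.span_base) auto
    then have "v \<in> cs.span (range dlt)" using fun_expand[of v] by simp }
  then show ?thesis by auto
qed

lemma inj_dlt: "inj dlt"
proof (rule injI)
  fix x y :: 'i assume "dlt x = dlt y"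
  then have "dlt x x = dlt y x" by simp
  then show "x = y" by (simp add: dlt_def split: if_splits)
qed

lemma indep_dlt: "cs.independent (range (dlt :: 'i::finite \<Rightarrow> _))"
proof -
  have "\<forall>v\<in>range dlt. c v = 0" if c: "(\<Sum>v\<in>range (dlt :: 'i \<Rightarrow> _). cscale (c v) v) = 0" for c
  proof
    fix v assume "v \<in> range (dlt :: 'i \<Rightarrow> _)"
    then obtain i where vi: "v = dlt i" by (rule rangeE)
    have "(\<Sum>v\<in>range (dlt :: 'i \<Rightarrow> _). cscale (c v) v) = (\<Sum>j\<in>UNIV. cscale (c (dlt j)) (dlt j))"
      by (simp add: sum.reindex[OF inj_dlt])
    then have "0 = (\<Sum>j\<in>UNIV. cscale (c (dlt j)) (dlt j)) i" using c by simp
    also have "\<dots> = (\<Sum>j\<in>UNIV. c (dlt j) * (if i = j then 1 else 0))"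
      by (simp add: sum_fun_apply dlt_def)
    also have "\<dots> = (\<Sum>j\<in>UNIV. if i = j then c (dlt j) else 0)"
      by (rule sum.cong) auto
    also have "\<dots> = c v" using vi by (simp add: sum.delta)
    finally show "c v = 0" by simp
  qed
  then show ?thesis by (subst cs.dependent_finite) auto
qed

interpretation cfd: finite_dimensional_vector_space "cscale :: complex \<Rightarrow> ('i::finite \<Rightarrow> complex) \<Rightarrow> _" "range dlt"
  by unfold_locales (auto simp: indep_dlt span_dlt)

lemma cdim_UNIV: "cdim (UNIV :: ('i::finite \<Rightarrow> complex) set) = CARD('i)"
  unfolding cdim_def using cfd.dim_UNIV card_image[OF inj_dlt] by simp


lemma linear_cs: 
  assumes "\<And>x y. f (x + y) = f x + f y" "\<And>c x. f (cscale c x) = cscale c (f x)"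
  shows "Vector_Spaces.linear cscale cscale (f :: ('i \<Rightarrow> complex) \<Rightarrow> ('o \<Rightarrow> complex))"
  using assms by (simp add: Vector_Spaces.linear_iff vector_space_cscale)

lemma linear_phi: "Vector_Spaces.linear cscale cscale (phi T \<alpha>)"
  by (rule linear_cs) (auto simp: phi_def fun_eq_iff algebra_simps sum.distrib sum_distrib_left)

lemma linear_phiT: "Vector_Spaces.linear cscale cscale (phiT T \<alpha>)"
  by (rule linear_cs) (auto simp: phiT_def fun_eq_iff algebra_simps sum.distrib sum_distrib_left)

lemma rank_kernel:
  fixes f :: "('i::finite \<Rightarrow> complex) \<Rightarrow> ('o \<Rightarrow> complex)"
  assumes lin: "Vector_Spaces.linear cscale cscale f"
    and S: "cs.subspace S" and K: "K \<subseteq> S" "cs.independent K" "\<forall>k\<in>K. f k = 0"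
  shows "cdim (f ` S) + card K \<le> cdim S"
proof -
  interpret lf: Vector_Spaces.linear cscale cscale f by (rule lin)
  obtain B where B: "K \<subseteq> B" "B \<subseteq> S" "cs.independent B" "S \<subseteq> cs.span B"
    using cs.maximal_independent_subset_extend[OF K(1) K(2)] by blast
  have fB: "finite B" using B(3) by (rule cfd.finiteI_independent)
  have cB: "card B = cs.dim S" using cs.basis_card_eq_dim[OF B(2) B(4) B(3)] .
  have "f ` S \<subseteq> f ` cs.span B" using B(4) by blast
  also have "\<dots> = cs.span (f ` B)" by (simp add: lf.span_image)
  also have "\<dots> \<subseteq> cs.span (f ` (B - K))"
  proof (rule cs.span_minimal)
    show "f ` B \<subseteq> cs.span (f ` (B - K))"
    proof
      fix y assume "y \<in> f ` B"
      then obtain x where x: "x \<in> B" "y = f x" by blast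
      show "y \<in> cs.span (f ` (B - K))"
      proof (cases "x \<in> K")
        case True then show ?thesis using K(3) x cs.span_zero by auto
      next
        case False then show ?thesis using x by (intro cs.span_base) auto
      qed
    qed
  qed simp
  finally have "cs.dim (f ` S) \<le> card (f ` (B - K))"
    using fB by (intro cs.dim_le_card) auto
  also have "\<dots> \<le> card (B - K)" using fB by (intro card_image_le) auto
  also have "\<dots> = card B - card K" using fB B(1) by (simp add: card_Diff_subset finite_subset)
  finally show ?thesis using cB unfolding cdim_def
    using card_mono[OF fB B(1)] by linarith
qed

lemma kernel_dim1:
  fixes f :: "('i::finite \<Rightarrow> complex) \<Rightarrow> ('o \<Rightarrow> complex)"
  assumes lin: "Vector_Spaces.linear cscale cscale f"
    and r: "cdim (range f) + 1 = CARD('i)"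
    and u: "f u = 0" and v: "f v = 0" "v \<noteq> 0"
  shows "\<exists>c. u = cscale c v"
proof (rule ccontr)
  assume nc: "\<not> (\<exists>c. u = cscale c v)"
  then have uv: "u \<noteq> v" by (metis cscale_def mult_1 ext)
  have "cs.independent {v}" using v(2) by (simp add: cs.independent_insert)
  moreover have "u \<notin> cs.span {v}" using nc by (auto simp: cs.span_singleton)
  ultimately have ind: "cs.independent {u, v}" using uv by (simp add: cs.independent_insert)
  have "cdim (f ` UNIV) + card {u, v} \<le> cdim (UNIV :: ('i \<Rightarrow> complex) set)"
    by (rule rank_kernel[OF lin]) (use ind u v in auto)
  then show False using r uv cdim_UNIV[where 'i='i] by simp
qed

lemma inj_from_dim:
  fixes f :: "('i::finite \<Rightarrow> complex) \<Rightarrow> ('o \<Rightarrow> complex)"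
  assumes lin: "Vector_Spaces.linear cscale cscale f"
    and S: "cs.subspace S" and d: "cdim S \<le> cdim (f ` S)"
  shows "inj_on f S"
proof (rule inj_onI, rule ccontr)
  interpret lf: Vector_Spaces.linear cscale cscale f by (rule lin)
  fix x y assume xy: "x \<in> S" "y \<in> S" "f x = f y" "x \<noteq> y"
  have h: "x - y \<in> S" using xy S by (simp add: cs.subspace_diff)
  have "f (x - y) = 0" using xy by (simp add: lf.diff)
  moreover have "x - y \<noteq> 0" using xy by simp
  ultimately have "cdim (f ` S) + card {x - y} \<le> cdim S"
    using h by (intro rank_kernel[OF lin S]) (auto simp: cs.independent_insert)
  then show False using d by simp
qed


definition adj :: "complex^'n^'n \<Rightarrow> complex^'n^'n" where
  "adj M = (\<chi> p r. det (\<chi> i k. if i = r then (if k = p then 1 else 0) else M $ i $ k))"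

lemma adj_right: "M ** adj M = mat (det M)"
proof -
  have "(M ** adj M) $ i $ r = (if i = r then det M else 0)" for i r
  proof -
    let ?c = "\<lambda>i'. row i' M"
    have e: "(\<chi> i' k. if i' = r then (if k = p then 1 else 0) else M $ i' $ k) =
             (\<chi> i'. if i' = r then axis p 1 else ?c i')" for p
      by (simp add: vec_eq_iff axis_def row_def)
    have "(M ** adj M) $ i $ r = (\<Sum>p\<in>UNIV. M $ i $ p * adj M $ p $ r)"
      by (simp add: matrix_matrix_mult_def)
    also have "\<dots> = (\<Sum>p\<in>UNIV. det (\<chi> i'. if i' = r then M $ i $ p *s axis p 1 else ?c i'))"
      by (simp add: adj_def e det_row_mul)
    also have "\<dots> = det (\<chi> i'. if i' = r then (\<Sum>p\<in>UNIV. M $ i $ p *s axis p 1) else ?c i')"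
      by (rule det_linear_row_sum[symmetric]) simp
    also have "(\<Sum>p\<in>UNIV. M $ i $ p *s axis p 1) = row i M"
      by (simp add: vec_eq_iff axis_def row_def sum_component if_distrib cong: if_cong)
    also have "det (\<chi> i'. if i' = r then row i M else ?c i') = (if i = r then det M else 0)"
    proof (cases "i = r")
      case True
      then have "(\<chi> i'. if i' = r then row i M else ?c i') = M" by (simp add: vec_eq_iff row_def)
      then show ?thesis using True by simp
    next
      case False
      have "det (\<chi> i'. if i' = r then row i M else ?c i') = 0"
        by (rule det_identical_rows[OF False]) (simp add: row_def vec_eq_iff False)
      then show ?thesis using False by simp
    qed
    finally show ?thesis .
  qed
  then show ?thesis by (simp add: vec_eq_iff mat_def)
qed


definition dpoly :: "complex^'n^'n \<Rightarrow> complex poly" where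
  "dpoly B = (\<Sum>p\<in>{p. p permutes (UNIV::'n set)}. of_int (sign p) *
      (\<Prod>i\<in>UNIV. [: B $ i $ p i, (if p i = i then 1 else 0) :]))"

lemma poly_dpoly: "poly (dpoly B) t = det (B + mat t)"
proof -
  have h: "poly [: B $ i $ p i, (if p i = i then 1 else 0) :] t = (B + mat t) $ i $ p i" for p i
    by (cases "p i = i") (auto simp: mat_def)
  show ?thesis
    unfolding dpoly_def det_def poly_sum poly_mult poly_prod poly_of_int h ..
qed

lemma coeff_dpoly: "coeff (dpoly (B::complex^'n^'n)) CARD('n) = 1"
proof -
  let ?q = "\<lambda>p. (\<Prod>i\<in>UNIV. [: B $ i $ p i, (if p i = i then 1 else 0) :] :: complex poly)"
  have c: "coeff (of_int (sign p) * ?q p) CARD('n) = (if p = id then 1 else 0)"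
    if p: "p permutes (UNIV::'n set)" for p
  proof (cases "p = id")
    case True
    have "degree (?q p) = (\<Sum>i\<in>UNIV. degree [: B $ i $ i, 1 :])"
      using True by (subst degree_prod_eq_sum_degree) auto
    also have "\<dots> = CARD('n)" by simp
    finally have d: "degree (?q p) = CARD('n)" .
    have "lead_coeff (?q p) = 1" using True by (simp add: lead_coeff_prod)
    then show ?thesis using d True by simp
  next
    case False
    then obtain j where j: "p j \<noteq> j" by (metis eq_id_iff)
    have "degree (?q p) \<le> (\<Sum>i\<in>UNIV. degree [: B $ i $ p i, (if p i = i then 1 else 0) :])"
      by (rule order_trans[OF degree_prod_sum_le]) auto
    also have "\<dots> = (\<Sum>i\<in>UNIV - {j}. degree [: B $ i $ p i, (if p i = i then 1 else 0) :])"
      using j by (subst sum.remove[of _ j]) auto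
    also have "\<dots> \<le> (\<Sum>i\<in>UNIV - {j}. (1::nat))"
      by (rule sum_mono) simp
    also have "\<dots> < CARD('n)" by (simp add: card_Diff_singleton)
    finally have "degree (?q p) < CARD('n)" .
    then have "coeff (?q p) CARD('n) = 0" by (rule coeff_eq_0)
    then show ?thesis using False by (simp add: of_int_poly)
  qed
  have "coeff (dpoly B) CARD('n) = (\<Sum>p\<in>{p. p permutes (UNIV::'n set)}. if p = id then 1 else 0)"
    unfolding dpoly_def coeff_sum by (rule sum.cong) (auto simp: c)
  also have "\<dots> = 1" by (simp add: sum.delta' permutes_id)
  finally show ?thesis .
qed

lemma finite_det_roots: "finite {t. det ((B::complex^'n^'n) + mat t) = 0}"
proof -
  have "dpoly B \<noteq> 0" using coeff_dpoly[of B] by auto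
  then show ?thesis using poly_roots_finite[of "dpoly B"] by (simp add: poly_dpoly)
qed


definition mlim :: "('x \<Rightarrow> complex^'n^'m) \<Rightarrow> complex^'n^'m \<Rightarrow> 'x filter \<Rightarrow> bool" where
  "mlim f L F \<longleftrightarrow> (\<forall>i j. ((\<lambda>x. f x $ i $ j) \<longlongrightarrow> L $ i $ j) F)"

lemma mlimI: "(\<And>i j. ((\<lambda>x. f x $ i $ j) \<longlongrightarrow> L $ i $ j) F) \<Longrightarrow> mlim f L F"
  by (simp add: mlim_def)

lemma mlimD: "mlim f L F \<Longrightarrow> ((\<lambda>x. f x $ i $ j) \<longlongrightarrow> L $ i $ j) F"
  by (simp add: mlim_def)

lemma mlim_const: "mlim (\<lambda>x. A) A F"
  by (simp add: mlim_def)

lemma mlim_add: "mlim f A F \<Longrightarrow> mlim g B F \<Longrightarrow> mlim (\<lambda>x. f x + g x) (A + B) F"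
  by (auto simp: mlim_def intro!: tendsto_add)

lemma mlim_diff: "mlim f A F \<Longrightarrow> mlim g B F \<Longrightarrow> mlim (\<lambda>x. f x - g x) (A - B) F"
  by (auto simp: mlim_def intro!: tendsto_diff)

lemma mlim_mult: "mlim f A F \<Longrightarrow> mlim g B F \<Longrightarrow> mlim (\<lambda>x. f x ** g x) (A ** B) F"
  unfolding mlim_def matrix_matrix_mult_def
  by (auto intro!: tendsto_sum tendsto_mult)

lemma mlim_transpose: "mlim f A F \<Longrightarrow> mlim (\<lambda>x. transpose (f x)) (transpose A) F"
  by (auto simp: mlim_def transpose_def)

lemma mlim_mat: "((\<lambda>x. c x) \<longlongrightarrow> c0) F \<Longrightarrow> mlim (\<lambda>x. mat (c x)) (mat c0) F"
  by (auto simp: mlim_def mat_def)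

lemma det_lim: "mlim f A F \<Longrightarrow> ((\<lambda>x. det (f x)) \<longlongrightarrow> det A) F"
  unfolding det_def mlim_def
  by (auto intro!: tendsto_sum tendsto_mult tendsto_prod)

lemma adj_lim: "mlim f A F \<Longrightarrow> mlim (\<lambda>x. adj (f x)) (adj A) F"
proof (rule mlimI)
  fix p r
  assume f: "mlim f A F"
  have "mlim (\<lambda>x. (\<chi> i k. if i = r then (if k = p then 1 else 0) else f x $ i $ k))
      (\<chi> i k. if i = r then (if k = p then 1 else 0) else A $ i $ k) F"
    using f by (auto simp: mlim_def)
  then show "((\<lambda>x. adj (f x) $ p $ r) \<longlongrightarrow> adj A $ p $ r) F"
    unfolding adj_def by (simp add: det_lim)
qed

lemma density0:
  fixes F :: "complex \<Rightarrow> complex"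
  assumes c: "(F \<longlongrightarrow> F 0) (at 0)" and fin: "finite S" and z: "\<And>t. t \<notin> S \<Longrightarrow> F t = 0"
  shows "F 0 = 0"
proof -
  have ev: "eventually (\<lambda>t. \<forall>s\<in>S. t \<noteq> s) (at (0::complex))"
    using fin by (intro eventually_ball_finite) (auto intro: eventually_neq_at_within)
  then have "eventually (\<lambda>t. F t = 0) (at (0::complex))"
    by eventually_elim (use z in auto)
  then have "(F \<longlongrightarrow> 0) (at 0)"
    by (simp add: tendsto_cong[of F "\<lambda>_. 0"])
  then show ?thesis using c tendsto_unique[OF at_neq_bot] by metis
qed

lemma density_m:
  fixes G H :: "complex \<Rightarrow> complex^'n^'m"
  assumes "mlim G (G 0) (at 0)" "mlim H (H 0) (at 0)" "finite S"
    and "\<And>t. t \<notin> S \<Longrightarrow> G t = H t"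
  shows "G 0 = H 0"
proof -
  have "(G 0 - H 0) $ i $ j = 0" for i j
  proof -
    have m: "mlim (\<lambda>t. G t - H t) (G 0 - H 0) (at 0)" using assms by (intro mlim_diff)
    show ?thesis
      using density0[of "\<lambda>t. (G t - H t) $ i $ j" S] mlimD[OF m, of i j] assms(3,4) by simp
  qed
  then show ?thesis by (simp add: vec_eq_iff)
qed


lemma sum_if_mult_l: "(\<Sum>k\<in>UNIV. (if i = k then d else 0) * f k) = (d::complex) * f (i::'n::finite)"
proof -
  have "(\<Sum>k\<in>UNIV. (if i = k then d else 0) * f k) = (\<Sum>k\<in>UNIV. if i = k then d * f k else 0)"
    by (rule sum.cong) auto
  then show ?thesis by simp
qed

lemma sum_if_mult_r: "(\<Sum>k\<in>UNIV. f k * (if k = j then d else 0)) = f (j::'n::finite) * (d::complex)"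
proof -
  have "(\<Sum>k\<in>UNIV. f k * (if k = j then d else 0)) = (\<Sum>k\<in>UNIV. if k = j then f k * d else 0)"
    by (rule sum.cong) auto
  then show ?thesis by simp
qed

lemma mat_mul_left: "mat d ** X = (\<chi> i j. (d::complex) * X $ i $ j)"
  by (simp add: vec_eq_iff matrix_matrix_mult_def mat_def sum_if_mult_l)

lemma mat_mul_right: "X ** mat d = (\<chi> i j. X $ i $ j * (d::complex))"
  by (simp add: vec_eq_iff matrix_matrix_mult_def mat_def sum_if_mult_r)

lemma mat_comm: "mat d ** X = X ** mat (d::complex)"
  by (simp add: mat_mul_left mat_mul_right mult.commute)

lemma mat_pull: "A ** (mat d ** Z) = mat (d::complex) ** (A ** Z)"
  by (metis mat_comm matrix_mul_assoc)

lemma adj_left_inv: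
  assumes "det (M::complex^'n^'n) \<noteq> 0"
  shows "adj M ** M = mat (det M)"
proof -
  obtain Mi where Mi: "M ** Mi = mat 1" "Mi ** M = mat 1"
    using assms invertible_det_nz unfolding invertible_def by blast
  have "adj M = (Mi ** M) ** adj M" using Mi by simp
  also have "\<dots> = Mi ** mat (det M)" by (simp add: matrix_mul_assoc[symmetric] adj_right)
  finally have "adj M ** M = Mi ** mat (det M) ** M" by simp
  also have "\<dots> = Mi ** (M ** mat (det M))" by (metis mat_comm matrix_mul_assoc)
  also have "\<dots> = mat (det M)" by (simp add: matrix_mul_assoc Mi)
  finally show ?thesis .
qed

lemma mlim_plus_mat: "mlim (\<lambda>t. M + mat t) M (at (0::complex))"
proof -
  have "mlim (\<lambda>t. M + mat t) (M + mat 0) (at (0::complex))"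
    by (intro mlim_add mlim_const mlim_mat tendsto_ident_at)
  then show ?thesis by simp
qed

lemma adj_left: "adj M ** M = mat (det (M::complex^'n^'n))"
proof -
  let ?G = "\<lambda>t. adj (M + mat t) ** (M + mat t)"
  let ?H = "\<lambda>t. mat (det (M + mat t)) :: complex^'n^'n"
  have "?G 0 = ?H 0"
  proof (rule density_m[where S = "{t. det (M + mat t) = 0}"])
    show "mlim ?G (?G 0) (at 0)"
      using mlim_plus_mat[of M] by (auto intro!: mlim_mult adj_lim)
    show "mlim ?H (?H 0) (at 0)"
      using mlim_plus_mat[of M] by (auto intro!: mlim_mat det_lim)
    show "finite {t. det (M + mat t) = 0}" by (rule finite_det_roots)
    show "\<And>t. t \<notin> {t. det (M + mat t) = 0} \<Longrightarrow> ?G t = ?H t"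
      by (auto intro: adj_left_inv)
  qed
  then show ?thesis by simp
qed

definition diagm :: "('n \<Rightarrow> complex) \<Rightarrow> complex^'n^'n" where
  "diagm d = (\<chi> i j. if i = j then d i else 0)"

lemma diagm_mult: "diagm d ** diagm e = diagm (\<lambda>i. d i * e i)"
proof -
  have "(diagm d ** diagm e) $ i $ j = diagm (\<lambda>i. d i * e i) $ i $ j" for i j
  proof -
    have "(diagm d ** diagm e) $ i $ j = (\<Sum>k\<in>UNIV. (if i = k then d i else 0) * (if k = j then e k else 0))"
      by (simp add: matrix_matrix_mult_def diagm_def)
    also have "\<dots> = d i * (if i = j then e i else 0)" by (rule sum_if_mult_l)
    finally show ?thesis by (simp add: diagm_def)
  qed
  then show ?thesis by (simp add: vec_eq_iff)
qed

lemma diagm_mult2: "diagm d ** (diagm e ** Z) = diagm (\<lambda>i. d i * e i) ** Z"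
  by (simp add: matrix_mul_assoc diagm_mult)

lemma diagm_const: "diagm (\<lambda>_. c) = mat c"
  by (simp add: diagm_def mat_def)

lemma strassen_inv:
  fixes B C :: "complex^'n^'n"
  assumes B: "det B \<noteq> 0" and C: "det C \<noteq> 0" and d2: "\<And>i. d2 i \<noteq> 0"
  shows "(B ** diagm d1 ** transpose C) ** adj (B ** diagm d2 ** transpose C) ** (B ** diagm d3 ** transpose C)
       = (B ** diagm d3 ** transpose C) ** adj (B ** diagm d2 ** transpose C) ** (B ** diagm d1 ** transpose C)"
proof -
  obtain Bi where Bi: "Bi ** B = mat 1"
    using B invertible_det_nz invertible_left_inverse by blast
  have "det (transpose C) \<noteq> 0" using C by simp
  then obtain Ci where Ci: "Ci ** transpose C = mat 1"
    using invertible_det_nz invertible_left_inverse by blast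
  have Ci': "transpose C ** Ci = mat 1"
    using Ci matrix_left_right_inverse by blast
  have BiB: "Bi ** (B ** Z) = Z" for Z by (simp add: matrix_mul_assoc Bi)
  have CCi: "transpose C ** (Ci ** Z) = Z" for Z by (simp add: matrix_mul_assoc Ci')
  define X2 where "X2 = B ** diagm d2 ** transpose C"
  define e where "e = (\<lambda>i. inverse (d2 i))"
  define Y where "Y = Ci ** diagm e ** Bi"
  have de: "diagm e ** diagm d2 = mat 1"
    using d2 by (simp add: diagm_mult e_def diagm_const[symmetric])
  have "Y ** X2 = Ci ** (diagm e ** ((Bi ** B) ** diagm d2)) ** transpose C"
    by (simp add: Y_def X2_def matrix_mul_assoc)
  also have "\<dots> = mat 1" by (simp add: Bi matrix_mul_assoc de Ci)
  finally have YX: "Y ** X2 = mat 1" .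
  have adjX: "adj X2 = mat (det X2) ** (Ci ** (diagm e ** Bi))"
  proof -
    have "adj X2 = (Y ** X2) ** adj X2" by (simp add: YX)
    also have "\<dots> = Y ** mat (det X2)" by (simp add: matrix_mul_assoc[symmetric] adj_right)
    also have "\<dots> = mat (det X2) ** Y" by (rule mat_comm[symmetric])
    finally show ?thesis by (simp only: Y_def matrix_mul_assoc)
  qed
  have key: "(B ** diagm da ** transpose C) ** adj X2 ** (B ** diagm db ** transpose C)
      = mat (det X2) ** (B ** (diagm (\<lambda>i. da i * (e i * db i)) ** transpose C))" for da db
    unfolding adjX by (simp add: matrix_mul_assoc[symmetric] mat_pull CCi BiB diagm_mult2 mult.assoc)
  show ?thesis unfolding X2_def[symmetric] key by (simp add: mult_ac)
qed


lemma mlim_diagm_t: "mlim (\<lambda>t. diagm (\<lambda>i. d i + t)) (diagm d) (at (0::complex))"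
proof (rule mlimI)
  fix i j
  have a: "((\<lambda>t. d i + t) \<longlongrightarrow> d i + 0) (at (0::complex))"
    by (intro tendsto_add tendsto_const tendsto_ident_at)
  show "((\<lambda>t. diagm (\<lambda>i. d i + t) $ i $ j) \<longlongrightarrow> diagm d $ i $ j) (at 0)"
    using a by (cases "i = j") (simp_all add: diagm_def)
qed

lemma strassen:
  fixes B C :: "complex^'n^'n"
  shows "(B ** diagm d1 ** transpose C) ** adj (B ** diagm d2 ** transpose C) ** (B ** diagm d3 ** transpose C)
       = (B ** diagm d3 ** transpose C) ** adj (B ** diagm d2 ** transpose C) ** (B ** diagm d1 ** transpose C)"
proof -
  let ?X = "\<lambda>t d. (B + mat t) ** diagm d ** transpose (C + mat t)"
  let ?G = "\<lambda>t. ?X t d1 ** adj (?X t (\<lambda>i. d2 i + t)) ** ?X t d3"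
  let ?H = "\<lambda>t. ?X t d3 ** adj (?X t (\<lambda>i. d2 i + t)) ** ?X t d1"
  let ?S = "{t. det (B + mat t) = 0} \<union> {t. det (C + mat t) = 0} \<union> range (\<lambda>i. - d2 i)"
  have mX: "mlim (\<lambda>t. ?X t d) (B ** diagm d ** transpose C) (at 0)" for d
    by (intro mlim_mult mlim_transpose mlim_plus_mat mlim_const)
  have mX2: "mlim (\<lambda>t. ?X t (\<lambda>i. d2 i + t)) (B ** diagm d2 ** transpose C) (at 0)"
    by (intro mlim_mult mlim_transpose mlim_plus_mat mlim_diagm_t)
  have "?G 0 = ?H 0"
  proof (rule density_m[where S = ?S])
    show "mlim ?G (?G 0) (at 0)" using mlim_mult[OF mlim_mult[OF mX adj_lim[OF mX2]] mX] by simp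
    show "mlim ?H (?H 0) (at 0)" using mlim_mult[OF mlim_mult[OF mX adj_lim[OF mX2]] mX] by simp
    show "finite ?S" using finite_det_roots[of B] finite_det_roots[of C] by auto
    show "?G t = ?H t" if "t \<notin> ?S" for t
    proof (rule strassen_inv)
      show "det (B + mat t) \<noteq> 0" "det (C + mat t) \<noteq> 0" using that by auto
      show "d2 i + t \<noteq> 0" for i using that
        by (metis (no_types, lifting) UnI2 add.commute add_eq_0_iff rangeI)
    qed
  qed
  then show ?thesis by simp
qed


definition Mt :: "('a::finite,'b::finite,'c::finite) tensor \<Rightarrow> ('b \<Rightarrow> 'c) \<Rightarrow> ('a \<Rightarrow> complex) \<Rightarrow> complex^'b^'b" where
  "Mt T g \<alpha> = (\<chi> j j'. \<Sum>i\<in>UNIV. \<alpha> i * T i j (g j'))"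

lemma sum_if_mult_r2: "(\<Sum>k\<in>UNIV. f k * (if k = j then d k else 0)) = f (j::'n::finite) * (d j::complex)"
proof -
  have "(\<Sum>k\<in>UNIV. f k * (if k = j then d k else 0)) = (\<Sum>k\<in>UNIV. if k = j then f k * d k else 0)"
    by (rule sum.cong) auto
  then show ?thesis by simp
qed

lemma diag_prod_entry:
  "(B ** diagm d ** transpose C) $ j $ j' = (\<Sum>p\<in>UNIV. B $ j $ p * d p * C $ j' $ p)"
  by (simp add: matrix_matrix_mult_def diagm_def transpose_def sum_if_mult_r2)

lemma mlim_Mt:
  assumes "\<forall>i j k. ((\<lambda>m. Tm m i j k) \<longlongrightarrow> T i j k) F"
  shows "mlim (\<lambda>m. Mt (Tm m) g \<alpha>) (Mt T g \<alpha>) F"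
  using assms unfolding mlim_def Mt_def by (auto intro!: tendsto_sum tendsto_mult tendsto_const)

lemma strassen_rank:
  fixes a :: "nat \<Rightarrow> 'a::finite \<Rightarrow> complex" and b :: "nat \<Rightarrow> 'b::finite \<Rightarrow> complex"
    and c :: "nat \<Rightarrow> 'c::finite \<Rightarrow> complex"
  assumes n: "n = CARD('b)"
  shows "Mt (sum_rank_one n a b c) g \<alpha>1 ** adj (Mt (sum_rank_one n a b c) g \<alpha>2) ** Mt (sum_rank_one n a b c) g \<alpha>3
       = Mt (sum_rank_one n a b c) g \<alpha>3 ** adj (Mt (sum_rank_one n a b c) g \<alpha>2) ** Mt (sum_rank_one n a b c) g \<alpha>1"
proof -
  obtain e :: "nat \<Rightarrow> 'b" where e: "bij_betw e {0..<n} UNIV"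
    using ex_bij_betw_nat_finite[of "UNIV :: 'b set"] n by auto
  define h where "h = inv_into {0..<n} e"
  have h: "bij_betw h UNIV {0..<n}" unfolding h_def by (rule bij_betw_inv_into[OF e])
  define B :: "complex^'b^'b" where "B = (\<chi> j p. b (h p) j)"
  define C :: "complex^'b^'b" where "C = (\<chi> j' p. c (h p) (g j'))"
  define d where "d = (\<lambda>\<alpha> p. \<Sum>i\<in>UNIV. \<alpha> i * a (h p) i)"
  have M: "Mt (sum_rank_one n a b c) g \<alpha> = B ** diagm (d \<alpha>) ** transpose C" for \<alpha>
  proof -
    have "Mt (sum_rank_one n a b c) g \<alpha> $ j $ j' = (B ** diagm (d \<alpha>) ** transpose C) $ j $ j'" for j j'
    proof -
      have "Mt (sum_rank_one n a b c) g \<alpha> $ j $ j' = (\<Sum>i\<in>UNIV. \<alpha> i * (\<Sum>l<n. a l i * b l j * c l (g j')))"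
        by (simp add: Mt_def sum_rank_one_def)
      also have "\<dots> = (\<Sum>l<n. (\<Sum>i\<in>UNIV. \<alpha> i * a l i) * b l j * c l (g j'))"
        by (simp add: sum_distrib_left sum_distrib_right mult_ac sum.swap[of _ UNIV])
      also have "\<dots> = (\<Sum>l\<in>{0..<n}. (\<Sum>i\<in>UNIV. \<alpha> i * a l i) * b l j * c l (g j'))"
        by (simp add: lessThan_atLeast0)
      also have "\<dots> = (\<Sum>p\<in>UNIV. (\<Sum>i\<in>UNIV. \<alpha> i * a (h p) i) * b (h p) j * c (h p) (g j'))"
        by (rule sum.reindex_bij_betw[OF h, symmetric])
      also have "\<dots> = (B ** diagm (d \<alpha>) ** transpose C) $ j $ j'"
        by (simp add: diag_prod_entry B_def C_def d_def mult_ac)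
      finally show ?thesis .
    qed
    then show ?thesis by (simp add: vec_eq_iff)
  qed
  show ?thesis unfolding M by (rule strassen)
qed

lemma border_strassen:
  fixes T :: "('a::finite,'b::finite,'c::finite) tensor"
  assumes "border_rank_le T CARD('b)"
  shows "Mt T g \<alpha>1 ** adj (Mt T g \<alpha>2) ** Mt T g \<alpha>3 = Mt T g \<alpha>3 ** adj (Mt T g \<alpha>2) ** Mt T g \<alpha>1"
proof -
  obtain a b c where lim: "\<forall>i j k. (\<lambda>m. sum_rank_one CARD('b) (a m) (b m) (c m) i j k) \<longlonglongrightarrow> T i j k"
    using assms unfolding border_rank_le_def by blast
  let ?Tm = "\<lambda>m. sum_rank_one CARD('b) (a m) (b m) (c m)"
  have m: "mlim (\<lambda>m. Mt (?Tm m) g \<alpha>) (Mt T g \<alpha>) sequentially" for \<alpha>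
    by (rule mlim_Mt) (use lim in auto)
  have L: "mlim (\<lambda>m. Mt (?Tm m) g \<alpha>1 ** adj (Mt (?Tm m) g \<alpha>2) ** Mt (?Tm m) g \<alpha>3)
      (Mt T g \<alpha>1 ** adj (Mt T g \<alpha>2) ** Mt T g \<alpha>3) sequentially"
    by (rule mlim_mult[OF mlim_mult[OF m adj_lim[OF m]] m])
  have R: "mlim (\<lambda>m. Mt (?Tm m) g \<alpha>3 ** adj (Mt (?Tm m) g \<alpha>2) ** Mt (?Tm m) g \<alpha>1)
      (Mt T g \<alpha>3 ** adj (Mt T g \<alpha>2) ** Mt T g \<alpha>1) sequentially"
    by (rule mlim_mult[OF mlim_mult[OF m adj_lim[OF m]] m])
  have eq: "(\<lambda>m. Mt (?Tm m) g \<alpha>1 ** adj (Mt (?Tm m) g \<alpha>2) ** Mt (?Tm m) g \<alpha>3)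
          = (\<lambda>m. Mt (?Tm m) g \<alpha>3 ** adj (Mt (?Tm m) g \<alpha>2) ** Mt (?Tm m) g \<alpha>1)"
    by (rule ext) (rule strassen_rank[OF refl])
  have "(Mt T g \<alpha>1 ** adj (Mt T g \<alpha>2) ** Mt T g \<alpha>3) $ i $ j
      = (Mt T g \<alpha>3 ** adj (Mt T g \<alpha>2) ** Mt T g \<alpha>1) $ i $ j" for i j
  proof -
    have l1: "(\<lambda>m. (Mt (?Tm m) g \<alpha>3 ** adj (Mt (?Tm m) g \<alpha>2) ** Mt (?Tm m) g \<alpha>1) $ i $ j)
        \<longlonglongrightarrow> (Mt T g \<alpha>1 ** adj (Mt T g \<alpha>2) ** Mt T g \<alpha>3) $ i $ j"
      using mlimD[OF L, of i j] by (simp only: strassen_rank[OF refl])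
    show ?thesis using LIMSEQ_unique[OF l1 mlimD[OF R, of i j]] .
  qed
  then show ?thesis by (simp add: vec_eq_iff)
qed


lemma det_zero_kernel:
  assumes "det (A::complex^'n^'n) = 0"
  shows "\<exists>x. x \<noteq> 0 \<and> A *v x = 0"
proof -
  have "\<not> inj ((*v) A)"
    using det_nz_iff_inj_gen[OF matrix_vector_mul_linear_gen[of A]] assms by simp
  then obtain x y where "x \<noteq> y" "A *v x = A *v y" unfolding inj_def by blast
  then show ?thesis by (intro exI[of _ "x - y"]) (simp add: matrix_vector_mult_diff_distrib)
qed

lemma det_nz_surj:
  assumes "det (A::complex^'n^'n) \<noteq> 0"
  shows "\<exists>x. A *v x = w"
proof -
  obtain Ai where "A ** Ai = mat 1"
    using assms invertible_det_nz invertible_right_inverse by blast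
  then have "A *v (Ai *v w) = w" by (simp add: matrix_vector_mul_assoc)
  then show ?thesis by blast
qed

lemma phi_M:
  "phi T \<alpha> \<beta> (g j') = (\<Sum>j\<in>UNIV. \<beta> j * Mt T g \<alpha> $ j $ j')"
proof -
  have "phi T \<alpha> \<beta> (g j') = (\<Sum>i\<in>UNIV. \<Sum>j\<in>UNIV. \<alpha> i * \<beta> j * T i j (g j'))"
    by (simp add: phi_def)
  also have "\<dots> = (\<Sum>j\<in>UNIV. \<Sum>i\<in>UNIV. \<alpha> i * \<beta> j * T i j (g j'))"
    by (rule sum.swap)
  also have "\<dots> = (\<Sum>j\<in>UNIV. \<beta> j * Mt T g \<alpha> $ j $ j')"
    by (intro sum.cong refl) (simp add: Mt_def sum_distrib_left ac_simps)
  finally show ?thesis .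
qed

lemma phiT_M:
  assumes g: "bij g"
  shows "phiT T \<alpha> \<gamma> j = (\<Sum>j'\<in>UNIV. Mt T g \<alpha> $ j $ j' * \<gamma> (g j'))"
proof -
  have "phiT T \<alpha> \<gamma> j = (\<Sum>i\<in>UNIV. \<Sum>k\<in>UNIV. \<alpha> i * \<gamma> k * T i j k)"
    by (simp add: phiT_def)
  also have "\<dots> = (\<Sum>k\<in>UNIV. \<Sum>i\<in>UNIV. \<alpha> i * \<gamma> k * T i j k)"
    by (rule sum.swap)
  also have "\<dots> = (\<Sum>j'\<in>UNIV. \<Sum>i\<in>UNIV. \<alpha> i * \<gamma> (g j') * T i j (g j'))"
    by (rule sum.reindex_bij_betw[OF g, symmetric])
  also have "\<dots> = (\<Sum>j'\<in>UNIV. Mt T g \<alpha> $ j $ j' * \<gamma> (g j'))"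
    by (intro sum.cong refl) (simp add: Mt_def sum_distrib_left sum_distrib_right ac_simps)
  finally show ?thesis .
qed

lemma pairing:
  "(\<Sum>j\<in>UNIV. v j * phiT T \<alpha> h j) = (\<Sum>k\<in>UNIV. h k * phi T \<alpha> v k)"
proof -
  have "(\<Sum>j\<in>UNIV. v j * phiT T \<alpha> h j) = (\<Sum>j\<in>UNIV. \<Sum>i\<in>UNIV. \<Sum>k\<in>UNIV. v j * (\<alpha> i * h k * T i j k))"
    by (simp add: phiT_def sum_distrib_left)
  also have "\<dots> = (\<Sum>i\<in>UNIV. \<Sum>j\<in>UNIV. \<Sum>k\<in>UNIV. v j * (\<alpha> i * h k * T i j k))"
    by (rule sum.swap)
  also have "\<dots> = (\<Sum>i\<in>UNIV. \<Sum>k\<in>UNIV. \<Sum>j\<in>UNIV. v j * (\<alpha> i * h k * T i j k))"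
    by (intro sum.cong refl sum.swap)
  also have "\<dots> = (\<Sum>k\<in>UNIV. \<Sum>i\<in>UNIV. \<Sum>j\<in>UNIV. v j * (\<alpha> i * h k * T i j k))"
    by (rule sum.swap)
  also have "\<dots> = (\<Sum>k\<in>UNIV. h k * phi T \<alpha> v k)"
    unfolding phi_def sum_distrib_left by (intro sum.cong refl) (simp add: ac_simps)
  finally show ?thesis .
qed

lemma phi_add_alpha: "phi T (\<lambda>i. \<alpha> i + t * \<alpha>' i) \<beta> = (\<lambda>k. phi T \<alpha> \<beta> k + t * phi T \<alpha>' \<beta> k)"
proof
  fix k
  have "phi T (\<lambda>i. \<alpha> i + t * \<alpha>' i) \<beta> k =
     (\<Sum>i\<in>UNIV. \<Sum>j\<in>UNIV. \<alpha> i * \<beta> j * T i j k + t * (\<alpha>' i * \<beta> j * T i j k))"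
    unfolding phi_def by (intro sum.cong refl) (simp add: algebra_simps)
  also have "\<dots> = phi T \<alpha> \<beta> k + t * phi T \<alpha>' \<beta> k"
    unfolding phi_def sum.distrib sum_distrib_left ..
  finally show "phi T (\<lambda>i. \<alpha> i + t * \<alpha>' i) \<beta> k = phi T \<alpha> \<beta> k + t * phi T \<alpha>' \<beta> k" .
qed

lemma phiT_add_alpha: "phiT T (\<lambda>i. \<alpha> i + t * \<alpha>' i) \<gamma> = (\<lambda>k. phiT T \<alpha> \<gamma> k + t * phiT T \<alpha>' \<gamma> k)"
proof
  fix k
  have "phiT T (\<lambda>i. \<alpha> i + t * \<alpha>' i) \<gamma> k =
     (\<Sum>i\<in>UNIV. \<Sum>j\<in>UNIV. \<alpha> i * \<gamma> j * T i k j + t * (\<alpha>' i * \<gamma> j * T i k j))"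
    unfolding phiT_def by (intro sum.cong refl) (simp add: algebra_simps)
  also have "\<dots> = phiT T \<alpha> \<gamma> k + t * phiT T \<alpha>' \<gamma> k"
    unfolding phiT_def sum.distrib sum_distrib_left ..
  finally show "phiT T (\<lambda>i. \<alpha> i + t * \<alpha>' i) \<gamma> k = phiT T \<alpha> \<gamma> k + t * phiT T \<alpha>' \<gamma> k" .
qed

lemma phi_dlt: "phi T (dlt i) \<beta> k = (\<Sum>j\<in>UNIV. \<beta> j * T i j k)"
proof -
  have "phi T (dlt i) \<beta> k = (\<Sum>i'\<in>UNIV. if i' = i then (\<Sum>j\<in>UNIV. \<beta> j * T i' j k) else 0)"
    unfolding phi_def by (intro sum.cong refl) (simp add: dlt_def)
  then show ?thesis by simp
qed

lemma phiT_dlt: "phiT T (dlt i) \<gamma> j = (\<Sum>k\<in>UNIV. \<gamma> k * T i j k)"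
proof -
  have "phiT T (dlt i) \<gamma> j = (\<Sum>i'\<in>UNIV. if i' = i then (\<Sum>k\<in>UNIV. \<gamma> k * T i' j k) else 0)"
    unfolding phiT_def by (intro sum.cong refl) (simp add: dlt_def)
  then show ?thesis by simp
qed

lemma det_nz_lrank:
  fixes T :: "('a::finite,'b::finite,'c::finite) tensor"
  assumes g: "bij g" and d: "det (Mt T g \<alpha>) \<noteq> 0"
  shows "lrank (phi T \<alpha>) = CARD('c)"
proof -
  have "\<gamma> \<in> range (phi T \<alpha>)" for \<gamma> :: "'c \<Rightarrow> complex"
  proof -
    have "det (transpose (Mt T g \<alpha>)) \<noteq> 0" using d by simp
    then obtain x where x: "transpose (Mt T g \<alpha>) *v x = (\<chi> j'. \<gamma> (g j'))"
      using det_nz_surj by blast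
    have "phi T \<alpha> (\<lambda>j. x $ j) (g j') = \<gamma> (g j')" for j'
    proof -
      have "\<gamma> (g j') = (transpose (Mt T g \<alpha>) *v x) $ j'" using x by simp
      also have "\<dots> = (\<Sum>j\<in>UNIV. x $ j * Mt T g \<alpha> $ j $ j')"
        by (simp add: matrix_vector_mult_def transpose_def mult.commute)
      finally show ?thesis by (simp add: phi_M)
    qed
    then have "phi T \<alpha> (\<lambda>j. x $ j) k = \<gamma> k" for k
      by (metis g bij_pointE)
    then have "\<gamma> = phi T \<alpha> (\<lambda>j. x $ j)" by auto
    then show ?thesis by blast
  qed
  then have "range (phi T \<alpha>) = UNIV" by auto
  then show ?thesis unfolding lrank_def rank_on_def using cdim_UNIV by simp
qed

lemma inj_phiT_det:
  fixes T :: "('a::finite,'b::finite,'c::finite) tensor"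
  assumes g: "bij g" and inj: "inj (phiT T \<alpha>)"
  shows "det (Mt T g \<alpha>) \<noteq> 0"
proof
  assume "det (Mt T g \<alpha>) = 0"
  then obtain w where w: "w \<noteq> 0" "Mt T g \<alpha> *v w = 0" using det_zero_kernel by blast
  define \<gamma> where "\<gamma> = (\<lambda>k. w $ (inv g k))"
  have gi: "inv g (g j) = j" for j using g by (simp add: bij_is_inj)
  have "phiT T \<alpha> \<gamma> = phiT T \<alpha> 0"
  proof
    fix j
    have "phiT T \<alpha> \<gamma> j = (Mt T g \<alpha> *v w) $ j"
      by (simp add: phiT_M[OF g] \<gamma>_def gi matrix_vector_mult_def)
    then show "phiT T \<alpha> \<gamma> j = phiT T \<alpha> 0 j" using w by (simp add: phiT_def)
  qed
  then have "\<gamma> = 0" using inj by (simp add: inj_eq)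
  then have "w $ j = 0" for j using gi[of j] unfolding \<gamma>_def by (metis zero_fun_apply)
  then show False using w by (simp add: vec_eq_iff)
qed


lemma surj_g_ext:
  assumes g: "bij (g::'b \<Rightarrow> 'c)" and h: "\<And>j. F (g j) = G (g j)"
  shows "F = G"
proof
  fix k
  obtain j where "k = g j" using g by (metis bij_pointE)
  then show "F k = G k" using h by simp
qed

lemma kernel_vec:
  fixes T :: "('a::finite,'b::finite,'c::finite) tensor"
  assumes g: "bij g" and x: "transpose (Mt T g \<alpha>) *v x = 0"
  shows "phi T \<alpha> (\<lambda>j. x $ j) = 0"
proof (rule surj_g_ext[OF g])
  fix j'
  have "phi T \<alpha> (\<lambda>j. x $ j) (g j') = (transpose (Mt T g \<alpha>) *v x) $ j'"
    by (simp add: phi_M matrix_vector_mult_def transpose_def mult.commute)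
  then show "phi T \<alpha> (\<lambda>j. x $ j) (g j') = 0 (g j')" using x by simp
qed

lemma det_replace_row_adj:
  fixes M :: "complex^'n^'n"
  shows "det (\<chi> i k. if i = p then r $ k else M $ i $ k) = (\<Sum>q\<in>UNIV. r $ q * adj M $ q $ p)"
proof -
  let ?c = "\<lambda>i'. row i' M"
  have e: "(\<chi> i' k. if i' = p then (if k = q then 1 else 0) else M $ i' $ k) =
           (\<chi> i'. if i' = p then axis q 1 else ?c i')" for q
    by (simp add: vec_eq_iff axis_def row_def)
  have r: "(\<Sum>q\<in>UNIV. r $ q *s axis q 1) = r"
    by (simp add: vec_eq_iff axis_def sum_component if_distrib cong: if_cong)
  have "(\<Sum>q\<in>UNIV. r $ q * adj M $ q $ p) = (\<Sum>q\<in>UNIV. det (\<chi> i'. if i' = p then r $ q *s axis q 1 else ?c i'))"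
    by (simp add: adj_def e det_row_mul)
  also have "\<dots> = det (\<chi> i'. if i' = p then (\<Sum>q\<in>UNIV. r $ q *s axis q 1) else ?c i')"
    by (rule det_linear_row_sum[symmetric]) simp
  also have "\<dots> = det (\<chi> i k. if i = p then r $ k else M $ i $ k)"
    unfolding r by (intro arg_cong[where f=det]) (simp add: vec_eq_iff row_def)
  finally show ?thesis by simp
qed

lemma adj_nz:
  fixes T :: "('a::finite,'b::finite,'c::finite) tensor"
  assumes g: "bij g" and card: "CARD('b) = CARD('c)"
    and r: "cdim (range (phi T \<alpha>0)) + 1 = CARD('b)"
    and d0: "det (Mt T g \<alpha>0) = 0"
  shows "adj (Mt T g \<alpha>0) \<noteq> 0"
proof
  assume A0: "adj (Mt T g \<alpha>0) = 0"
  let ?M = "Mt T g \<alpha>0"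
  let ?f = "phi T \<alpha>0"
  interpret lf: Vector_Spaces.linear cscale cscale ?f by (rule linear_phi)
  have "det (transpose ?M) = 0" using d0 by simp
  then obtain x where x: "x \<noteq> 0" "transpose ?M *v x = 0" using det_zero_kernel by blast
  define v where "v = (\<lambda>j. x $ j)"
  have fv: "?f v = 0" unfolding v_def by (rule kernel_vec[OF g x(2)])
  have "v \<noteq> 0" using x(1) by (auto simp: v_def vec_eq_iff fun_eq_iff)
  then obtain p where vp: "v p \<noteq> 0" by (auto simp: fun_eq_iff)
  have ker: "c = 0" if c1: "?f c = 0" and c2: "c p = 0" for c
  proof -
    obtain s where "c = cscale s v" using kernel_dim1[OF linear_phi r c1 fv \<open>v \<noteq> 0\<close>] by blast
    then show ?thesis using c2 vp by (auto simp: fun_eq_iff)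
  qed
  have "range ?f \<noteq> UNIV"
  proof
    assume "range ?f = UNIV"
    then have "cdim (range ?f) = CARD('c)" using cdim_UNIV by simp
    then show False using r card by simp
  qed
  then obtain \<gamma> where \<gamma>: "\<gamma> \<notin> range ?f" by blast
  define rr where "rr = (\<chi> j'. \<gamma> (g j'))"
  define M' where "M' = (\<chi> i k. if i = p then rr $ k else ?M $ i $ k)"
  have "det M' = (\<Sum>q\<in>UNIV. rr $ q * adj ?M $ q $ p)"
    unfolding M'_def by (rule det_replace_row_adj)
  then have dM': "det M' = 0" using A0 by simp
  have "det (transpose M') = 0" using dM' by simp
  then obtain y where y: "y \<noteq> 0" "transpose M' *v y = 0" using det_zero_kernel by blast
  define c where "c = (\<lambda>j. if j = p then 0 else y $ j)"
  have eq: "?f c (g k) + y $ p * \<gamma> (g k) = 0" for k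
  proof -
    have "0 = (transpose M' *v y) $ k" using y by simp
    also have "\<dots> = (\<Sum>j\<in>UNIV. (if j = p then rr $ k else ?M $ j $ k) * y $ j)"
      by (simp add: matrix_vector_mult_def transpose_def M'_def)
    also have "\<dots> = (\<Sum>j\<in>UNIV. (if j = p then y $ p * rr $ k else 0) + c j * ?M $ j $ k)"
      by (intro sum.cong refl) (auto simp: c_def)
    also have "\<dots> = y $ p * rr $ k + (\<Sum>j\<in>UNIV. c j * ?M $ j $ k)"
      by (simp add: sum.distrib)
    also have "\<dots> = ?f c (g k) + y $ p * \<gamma> (g k)"
      by (simp add: phi_M rr_def)
    finally show ?thesis by simp
  qed
  show False
  proof (cases "y $ p = 0")
    case True
    have "?f c = 0"
      by (rule surj_g_ext[OF g]) (use eq True in simp)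
    then have "c = 0" using ker by (simp add: c_def)
    have "y $ j = 0" for j
    proof (cases "j = p")
      case False
      then have "c j = y $ j" by (simp add: c_def)
      with \<open>c = 0\<close> show ?thesis by simp
    qed (use True in simp)
    then show False using y by (simp add: vec_eq_iff)
  next
    case False
    have "\<gamma> = ?f (cscale (- inverse (y $ p)) c)"
    proof (rule surj_g_ext[OF g])
      fix k
      have "?f (cscale (- inverse (y $ p)) c) (g k) = - inverse (y $ p) * ?f c (g k)"
        by (simp only: lf.scale cscale_apply)
      also have "\<dots> = \<gamma> (g k)" using eq[of k] False by (simp add: field_simps add_eq_0_iff)
      finally show "\<gamma> (g k) = ?f (cscale (- inverse (y $ p)) c) (g k)" by simp
    qed
    then show False using \<gamma> by blast
  qed
qed

lemma adj_rank1:
  fixes T :: "('a::finite,'b::finite,'c::finite) tensor"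
  assumes g: "bij g"
    and r: "cdim (range (phi T \<alpha>0)) + 1 = CARD('b)"
    and d0: "det (Mt T g \<alpha>0) = 0"
    and nz: "adj (Mt T g \<alpha>0) \<noteq> 0"
  shows "\<exists>a v. v \<noteq> 0 \<and> phi T \<alpha>0 v = 0 \<and> a \<noteq> 0 \<and> (\<forall>q j. adj (Mt T g \<alpha>0) $ q $ j = a q * v j)"
proof -
  let ?M = "Mt T g \<alpha>0"
  let ?A = "adj ?M"
  let ?f = "phi T \<alpha>0"
  have AM: "?A ** ?M = 0" using adj_left[of ?M] d0 by simp
  define rowf where "rowf q = (\<lambda>j. ?A $ q $ j)" for q
  have fr: "?f (rowf q) = 0" for q
  proof (rule surj_g_ext[OF g])
    fix k
    have "?f (rowf q) (g k) = (?A ** ?M) $ q $ k"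
      by (simp add: phi_M rowf_def matrix_matrix_mult_def)
    then show "?f (rowf q) (g k) = 0 (g k)" using AM by simp
  qed
  obtain q0 j0 where qj: "?A $ q0 $ j0 \<noteq> 0" using nz by (auto simp: vec_eq_iff)
  define v where "v = rowf q0"
  have v0: "v \<noteq> 0" using qj by (auto simp: v_def rowf_def fun_eq_iff)
  have "\<forall>q. \<exists>s. rowf q = cscale s v"
    using kernel_dim1[OF linear_phi r fr _ v0] fr v_def by blast
  then obtain a where a: "\<And>q. rowf q = cscale (a q) v" by metis
  have "?A $ q $ j = a q * v j" for q j
    using fun_cong[OF a[of q], of j] by (simp add: rowf_def)
  moreover have "a \<noteq> 0"
  proof
    assume "a = 0"
    then have "?A $ q0 $ j0 = 0" using fun_cong[OF a[of q0], of j0] by (simp add: rowf_def)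
    then show False using qj by simp
  qed
  ultimately show ?thesis using v0 fr v_def by blast
qed


definition sf :: "('c::finite \<Rightarrow> complex) \<Rightarrow> ('c \<Rightarrow> complex) \<Rightarrow> complex" where
  "sf c0 \<gamma> = (\<Sum>k\<in>UNIV. \<gamma> k * c0 k)"

lemma sf_add: "sf c0 (\<gamma> + \<gamma>') = sf c0 \<gamma> + sf c0 \<gamma>'"
  by (simp add: sf_def algebra_simps sum.distrib)

lemma sf_diff: "sf c0 (\<gamma> - \<gamma>') = sf c0 \<gamma> - sf c0 \<gamma>'"
  by (simp add: sf_def algebra_simps sum_subtractf)

lemma sf_scale: "sf c0 (cscale c \<gamma>) = c * sf c0 \<gamma>"
  by (simp add: sf_def sum_distrib_left mult_ac)

lemma sf_zero: "sf c0 0 = 0"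
  by (simp add: sf_def)

lemma hyperplane_sf:
  assumes c0: "c0 k0 \<noteq> 0"
  shows "hyperplane {\<gamma> :: 'c::finite \<Rightarrow> complex. sf c0 \<gamma> = 0}"
proof -
  let ?H = "{\<gamma> :: 'c \<Rightarrow> complex. sf c0 \<gamma> = 0}"
  define \<gamma>1 where "\<gamma>1 = cscale (inverse (c0 k0)) (dlt k0)"
  have s1: "sf c0 \<gamma>1 = 1"
  proof -
    have "sf c0 \<gamma>1 = (\<Sum>k\<in>UNIV. if k = k0 then inverse (c0 k0) * c0 k else 0)"
      unfolding sf_def \<gamma>1_def by (intro sum.cong refl) (simp add: dlt_def)
    then show ?thesis using c0 by simp
  qed
  have sub: "cs.subspace ?H"
    unfolding cs.subspace_def by (simp add: sf_add sf_scale sf_zero)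
  have spH: "cs.span ?H = ?H" using sub by (rule cs.span_eq_iff[THEN iffD2])
  have "\<gamma>1 \<notin> cs.span ?H" unfolding spH using s1 by simp
  then have di: "cs.dim (insert \<gamma>1 ?H) = cs.dim ?H + 1" by (simp add: cfd.dim_insert)
  have "UNIV \<subseteq> cs.span (insert \<gamma>1 ?H)"
  proof
    fix \<gamma> :: "'c \<Rightarrow> complex"
    have a: "\<gamma> - cscale (sf c0 \<gamma>) \<gamma>1 \<in> cs.span (insert \<gamma>1 ?H)"
      by (rule cs.span_base) (simp add: sf_diff sf_scale s1)
    have b: "cscale (sf c0 \<gamma>) \<gamma>1 \<in> cs.span (insert \<gamma>1 ?H)"
      by (intro cs.span_scale cs.span_base) simp
    have "\<gamma> = (\<gamma> - cscale (sf c0 \<gamma>) \<gamma>1) + cscale (sf c0 \<gamma>) \<gamma>1" by simp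
    then show "\<gamma> \<in> cs.span (insert \<gamma>1 ?H)" using cs.span_add[OF a b] by simp
  qed
  then have "cs.dim (UNIV :: ('c \<Rightarrow> complex) set) \<le> cs.dim (insert \<gamma>1 ?H)" by (rule cfd.dim_mono)
  moreover have "cs.dim (insert \<gamma>1 ?H) \<le> cs.dim (UNIV :: ('c \<Rightarrow> complex) set)"
    by (rule cfd.dim_subset) simp
  ultimately have "cs.dim ?H + 1 = CARD('c)" using di cdim_UNIV[where 'i='c] unfolding cdim_def by simp
  then show ?thesis unfolding hyperplane_def csubspace_def cdim_def using sub by simp
qed


lemma Mt_lin: "Mt T g (\<lambda>i. \<alpha> i + t * \<alpha>' i) $ j $ j' = Mt T g \<alpha> $ j $ j' + t * Mt T g \<alpha>' $ j $ j'"
  by (simp add: Mt_def algebra_simps sum.distrib sum_distrib_left)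

lemma imprim_from_line:
  fixes T :: "('a::finite,'b::finite,'c::finite) tensor"
  assumes g: "bij g" and card: "CARD('b) = CARD('c)"
    and D1: "\<And>\<alpha>. det (Mt T g \<alpha>) = 0"
    and v: "v p0 \<noteq> 0" and c0: "c0 k0 \<noteq> 0"
    and x: "\<And>\<alpha>. phi T \<alpha> v = cscale (x \<alpha>) c0"
    and x2: "x \<alpha>2 \<noteq> 0"
  shows "rank_on (phiT T \<alpha>1) {\<gamma>. sf c0 \<gamma> = 0} \<le> CARD('b) - 1 - 1"
proof (rule ccontr)
  let ?H = "{\<gamma> :: 'c \<Rightarrow> complex. sf c0 \<gamma> = 0}"
  assume nle: "\<not> rank_on (phiT T \<alpha>1) ?H \<le> CARD('b) - 1 - 1"
  have hH: "hyperplane ?H" by (rule hyperplane_sf[of c0 k0, OF c0])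
  then have subH: "cs.subspace ?H" and dH: "cdim ?H = CARD('c) - 1"
    unfolding hyperplane_def csubspace_def by auto
  have inj1: "inj_on (phiT T \<alpha>1) ?H"
    by (rule inj_from_dim[OF linear_phiT subH]) (use nle dH card in \<open>auto simp: rank_on_def\<close>)
  define \<gamma>1 where "\<gamma>1 = cscale (inverse (c0 k0)) (dlt k0)"
  have s1: "sf c0 \<gamma>1 = 1"
  proof -
    have "sf c0 \<gamma>1 = (\<Sum>k\<in>UNIV. if k = k0 then inverse (c0 k0) * c0 k else 0)"
      unfolding sf_def \<gamma>1_def by (intro sum.cong refl) (simp add: dlt_def)
    then show ?thesis using c0 by simp
  qed
  define w1 where "w1 = cscale (inverse (v p0)) (dlt p0)"
  have w1: "(\<Sum>j\<in>UNIV. v j * w1 j) = 1"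
  proof -
    have "(\<Sum>j\<in>UNIV. v j * w1 j) = (\<Sum>j\<in>UNIV. if j = p0 then v j * inverse (v p0) else 0)"
      unfolding w1_def by (intro sum.cong refl) (simp add: dlt_def)
    then show ?thesis using v by simp
  qed
  define \<Psi> where "\<Psi> \<alpha> \<gamma> = phiT T \<alpha> (\<gamma> - cscale (sf c0 \<gamma>) \<gamma>1) + cscale (sf c0 \<gamma>) w1" for \<alpha> \<gamma>
  have sh: "sf c0 (\<gamma> - cscale (sf c0 \<gamma>) \<gamma>1) = 0" for \<gamma>
    by (simp add: sf_diff sf_scale s1)
  have pairx: "(\<Sum>j\<in>UNIV. v j * phiT T \<alpha> h j) = x \<alpha> * sf c0 h" for \<alpha> h
    unfolding pairing x by (simp add: sf_def sum_distrib_left mult_ac)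
  have pairPsi: "(\<Sum>j\<in>UNIV. v j * \<Psi> \<alpha> \<gamma> j) = sf c0 \<gamma>" for \<alpha> \<gamma>
  proof -
    have "(\<Sum>j\<in>UNIV. v j * \<Psi> \<alpha> \<gamma> j) =
      (\<Sum>j\<in>UNIV. v j * phiT T \<alpha> (\<gamma> - cscale (sf c0 \<gamma>) \<gamma>1) j) + sf c0 \<gamma> * (\<Sum>j\<in>UNIV. v j * w1 j)"
      by (simp add: \<Psi>_def algebra_simps sum.distrib sum_distrib_left)
    also have "\<dots> = sf c0 \<gamma>" by (simp add: pairx sh w1)
    finally show ?thesis .
  qed
  have claimA: "\<gamma> = 0" if inj: "inj_on (phiT T \<alpha>) ?H" and P0: "\<Psi> \<alpha> \<gamma> = 0" for \<alpha> \<gamma>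
  proof -
    interpret lf: Vector_Spaces.linear cscale cscale "phiT T \<alpha>" by (rule linear_phiT)
    have "sf c0 \<gamma> = 0" using pairPsi[of \<alpha> \<gamma>] P0 by simp
    then have "phiT T \<alpha> \<gamma> = 0" using P0 by (simp add: \<Psi>_def)
    then have "phiT T \<alpha> \<gamma> = phiT T \<alpha> 0" by (simp add: lf.zero)
    moreover have "\<gamma> \<in> ?H" "(0::'c \<Rightarrow> complex) \<in> ?H" using \<open>sf c0 \<gamma> = 0\<close> by (auto simp: sf_zero)
    ultimately show ?thesis using inj by (simp add: inj_on_def)
  qed
  have claimB: "inj (phiT T \<alpha>)" if P: "\<And>\<gamma>. \<Psi> \<alpha> \<gamma> = 0 \<Longrightarrow> \<gamma> = 0" and xa: "x \<alpha> \<noteq> 0" for \<alpha>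
  proof -
    interpret lf: Vector_Spaces.linear cscale cscale "phiT T \<alpha>" by (rule linear_phiT)
    show ?thesis unfolding lf.inj_iff_eq_0
    proof (intro allI impI)
      fix \<gamma> assume z: "phiT T \<alpha> \<gamma> = 0"
      have "x \<alpha> * sf c0 \<gamma> = 0" using pairx[of \<alpha> \<gamma>] z by simp
      then have "sf c0 \<gamma> = 0" using xa by simp
      then have "\<Psi> \<alpha> \<gamma> = 0" using z by (simp add: \<Psi>_def)
      then show "\<gamma> = 0" by (rule P)
    qed
  qed
  define Q where "Q \<alpha> = (\<chi> j j'. Mt T g \<alpha> $ j $ j'
      - (\<Sum>j''\<in>UNIV. Mt T g \<alpha> $ j $ j'' * \<gamma>1 (g j'')) * c0 (g j') + w1 j * c0 (g j'))" for \<alpha>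
  have sfg: "sf c0 \<gamma> = (\<Sum>j'\<in>UNIV. \<gamma> (g j') * c0 (g j'))" for \<gamma>
    unfolding sf_def by (rule sum.reindex_bij_betw[OF g, symmetric])
  have QPsi: "\<Psi> \<alpha> \<gamma> j = (Q \<alpha> *v (\<chi> j'. \<gamma> (g j'))) $ j" for \<alpha> \<gamma> j
  proof -
    let ?M = "Mt T g \<alpha>"
    let ?m1 = "\<Sum>j''\<in>UNIV. ?M $ j $ j'' * \<gamma>1 (g j'')"
    let ?s = "sf c0 \<gamma>"
    have "\<Psi> \<alpha> \<gamma> j = (\<Sum>j'\<in>UNIV. ?M $ j $ j' * (\<gamma> (g j') - ?s * \<gamma>1 (g j'))) + ?s * w1 j"
      by (simp add: \<Psi>_def phiT_M[OF g])
    also have "\<dots> = (\<Sum>j'\<in>UNIV. ?M $ j $ j' * \<gamma> (g j')) - ?s * ?m1 + ?s * w1 j"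
      by (simp add: right_diff_distrib sum_subtractf sum_distrib_left mult_ac)
    also have "\<dots> = (\<Sum>j'\<in>UNIV. ?M $ j $ j' * \<gamma> (g j') - ?m1 * (\<gamma> (g j') * c0 (g j')) + w1 j * (\<gamma> (g j') * c0 (g j')))"
      by (simp add: sfg sum.distrib sum_subtractf sum_distrib_left mult_ac, rule sum.swap)
    also have "\<dots> = (Q \<alpha> *v (\<chi> j'. \<gamma> (g j'))) $ j"
      by (simp add: Q_def matrix_vector_mult_def algebra_simps)
    finally show ?thesis .
  qed
  have gi: "g (inv g k) = k" for k using g by (simp add: bij_is_surj surj_f_inv_f)
  have detQ_inj: "\<gamma> = 0" if d: "det (Q \<alpha>) \<noteq> 0" and P0: "\<Psi> \<alpha> \<gamma> = 0" for \<alpha> \<gamma>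
  proof -
    have "inj ((*v) (Q \<alpha>))"
      using det_nz_iff_inj_gen[OF matrix_vector_mul_linear_gen[of "Q \<alpha>"]] d by simp
    moreover have "Q \<alpha> *v (\<chi> j'. \<gamma> (g j')) = Q \<alpha> *v 0"
      using P0 QPsi[of \<alpha> \<gamma>] by (simp add: vec_eq_iff fun_eq_iff)
    ultimately have "(\<chi> j'. \<gamma> (g j')) = 0" by (rule injD)
    then have "\<gamma> (g j') = 0" for j' by (simp add: vec_eq_iff)
    then show ?thesis by (metis gi fun_eq_iff zero_fun_apply)
  qed
  have inj_detQ: "det (Q \<alpha>) \<noteq> 0" if P: "\<And>\<gamma>. \<Psi> \<alpha> \<gamma> = 0 \<Longrightarrow> \<gamma> = 0" for \<alpha>
  proof
    assume "det (Q \<alpha>) = 0"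
    then obtain w where w: "w \<noteq> 0" "Q \<alpha> *v w = 0" using det_zero_kernel by blast
    define \<gamma> where "\<gamma> = (\<lambda>k. w $ (inv g k))"
    have ginv: "inv g (g j) = j" for j using g by (simp add: bij_is_inj)
    have "(\<chi> j'. \<gamma> (g j')) = w" by (simp add: \<gamma>_def ginv vec_eq_iff)
    then have "\<Psi> \<alpha> \<gamma> = 0" using QPsi[of \<alpha> \<gamma>] w by (simp add: fun_eq_iff)
    then have "\<gamma> = 0" by (rule P)
    then have "w $ j = 0" for j using ginv[of j] unfolding \<gamma>_def by (metis zero_fun_apply)
    then show False using w by (simp add: vec_eq_iff)
  qed
  define alt where "alt t = (\<lambda>i. \<alpha>1 i + t * \<alpha>2 i)" for t
  have mM: "mlim (\<lambda>t. Mt T g (alt t)) (Mt T g \<alpha>1) (at (0::complex))"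
  proof (rule mlimI)
    fix j j'
    have "((\<lambda>t. Mt T g \<alpha>1 $ j $ j' + t * Mt T g \<alpha>2 $ j $ j') \<longlongrightarrow> Mt T g \<alpha>1 $ j $ j' + 0 * Mt T g \<alpha>2 $ j $ j') (at 0)"
      by (intro tendsto_intros)
    then show "((\<lambda>t. Mt T g (alt t) $ j $ j') \<longlongrightarrow> Mt T g \<alpha>1 $ j $ j') (at 0)"
      by (simp add: alt_def Mt_lin)
  qed
  have mQ: "mlim (\<lambda>t. Q (alt t)) (Q \<alpha>1) (at (0::complex))"
  proof (rule mlimI)
    fix j j'
    show "((\<lambda>t. Q (alt t) $ j $ j') \<longlongrightarrow> Q \<alpha>1 $ j $ j') (at 0)"
      unfolding Q_def vec_lambda_beta
      by (intro tendsto_add tendsto_diff tendsto_mult tendsto_sum tendsto_const mlimD[OF mM])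
  qed
  have dQ1: "det (Q \<alpha>1) \<noteq> 0"
    by (rule inj_detQ) (rule claimA[OF inj1])
  have ev1: "eventually (\<lambda>t. det (Q (alt t)) \<noteq> 0) (at (0::complex))"
    by (rule tendsto_imp_eventually_ne[OF det_lim[OF mQ] dQ1])
  have xat: "x (alt t) = x \<alpha>1 + t * x \<alpha>2" for t
  proof -
    have "cscale (x (alt t)) c0 = phi T (alt t) v" by (simp add: x)
    also have "\<dots> = (\<lambda>k. phi T \<alpha>1 v k + t * phi T \<alpha>2 v k)" by (simp add: alt_def phi_add_alpha)
    finally have "cscale (x (alt t)) c0 k0 = phi T \<alpha>1 v k0 + t * phi T \<alpha>2 v k0"
      by (rule fun_cong)
    then have "x (alt t) * c0 k0 = (x \<alpha>1 + t * x \<alpha>2) * c0 k0"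
      by (simp add: x algebra_simps)
    then show ?thesis using c0 by simp
  qed
  have ev2: "eventually (\<lambda>t. x (alt t) \<noteq> 0) (at (0::complex))"
  proof -
    have "eventually (\<lambda>t. t \<noteq> - x \<alpha>1 / x \<alpha>2) (at (0::complex))"
      by (rule eventually_neq_at_within)
    then show ?thesis
    proof eventually_elim
      case (elim t)
      show ?case
      proof
        assume "x (alt t) = 0"
        then have "t * x \<alpha>2 = - x \<alpha>1" by (simp add: xat add_eq_0_iff)
        then have "t = - x \<alpha>1 / x \<alpha>2" using x2 by (simp add: field_simps)
        then show False using elim by simp
      qed
    qed
  qed
  obtain t where t1: "det (Q (alt t)) \<noteq> 0" and t2: "x (alt t) \<noteq> 0"
    using eventually_happens'[OF at_neq_bot eventually_conj[OF ev1 ev2]] by blast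
  have "inj (phiT T (alt t))"
    by (rule claimB[OF _ t2]) (rule detQ_inj[OF t1])
  then have "det (Mt T g (alt t)) \<noteq> 0" by (rule inj_phiT_det[OF g])
  then show False using D1 by simp
qed


lemma border_exists:
  fixes T :: "('a::finite,'b::finite,'c::finite) tensor"
  shows "\<exists>s. border_rank_le T s"
proof -
  let ?N = "CARD('a \<times> 'b \<times> 'c)"
  obtain e :: "nat \<Rightarrow> 'a \<times> 'b \<times> 'c" where e: "bij_betw e {0..<?N} UNIV"
    using ex_bij_betw_nat_finite[of "UNIV :: ('a \<times> 'b \<times> 'c) set"] by auto
  define a where "a = (\<lambda>l i. if i = fst (e l) then T (fst (e l)) (fst (snd (e l))) (snd (snd (e l))) else 0)"
  define b where "b = (\<lambda>l. dlt (fst (snd (e l))))"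
  define c where "c = (\<lambda>l. dlt (snd (snd (e l))))"
  have "sum_rank_one ?N a b c i j k = T i j k" for i j k
  proof -
    let ?F = "\<lambda>t::'a \<times> 'b \<times> 'c. (if i = fst t then T (fst t) (fst (snd t)) (snd (snd t)) else 0)
        * dlt (fst (snd t)) j * dlt (snd (snd t)) k"
    have "sum_rank_one ?N a b c i j k = (\<Sum>l\<in>{0..<?N}. ?F (e l))"
      by (simp add: sum_rank_one_def a_def b_def c_def lessThan_atLeast0)
    also have "\<dots> = (\<Sum>t\<in>UNIV. ?F t)" by (rule sum.reindex_bij_betw[OF e])
    also have "\<dots> = (\<Sum>t\<in>UNIV. if t = (i, j, k) then T i j k else 0)"
      by (intro sum.cong refl) (auto simp: dlt_def)
    also have "\<dots> = T i j k" by simp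
    finally show ?thesis .
  qed
  then have "border_rank_le T ?N"
    unfolding border_rank_le_def
    by (intro exI[of _ "\<lambda>_. a"] exI[of _ "\<lambda>_. b"] exI[of _ "\<lambda>_. c"]) simp
  then show ?thesis by blast
qed

theorem mainTheorem6:
  fixes T :: "('a::finite, 'b::finite, 'c::finite) tensor"
  assumes "CARD('a) \<le> CARD('b)"
    and "CARD('b) = CARD('c)"
    and "concise T"
    and "primitive_bounded_rank T (CARD('b) - 1)"
  shows "border_rank T \<noteq> CARD('b)"
proof
  assume br: "border_rank T = CARD('b)"
  note card = assms(2)
  have brl: "border_rank_le T CARD('b)"
    using LeastI_ex[OF border_exists[of T]] br unfolding border_rank_def by simp
  obtain g :: "'b \<Rightarrow> 'c" where g: "bij g"
    using finite_same_card_bij[of "UNIV :: 'b set" "UNIV :: 'c set"] card by auto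
  have bnd: "bounded_rank T (CARD('b) - 1)" and nimp: "\<not> imprimitive T (CARD('b) - 1)"
    using assms(4) unfolding primitive_bounded_rank_def by auto
  obtain \<alpha>0 where a0: "lrank (phi T \<alpha>0) = CARD('b) - 1"
    using bnd unfolding bounded_rank_def by blast
  have allr: "lrank (phi T \<alpha>) \<le> CARD('b) - 1" for \<alpha>
    using bnd unfolding bounded_rank_def by blast
  have n1: "CARD('b) \<ge> 1" by (simp add: Suc_leI)
  have D1: "det (Mt T g \<alpha>) = 0" for \<alpha>
  proof (rule ccontr)
    assume "det (Mt T g \<alpha>) \<noteq> 0"
    then have "lrank (phi T \<alpha>) = CARD('c)" by (rule det_nz_lrank[OF g])
    then show False using allr[of \<alpha>] card n1 by linarith
  qed
  have r: "cdim (range (phi T \<alpha>0)) + 1 = CARD('b)"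
    using a0 n1 unfolding lrank_def rank_on_def by simp
  have A0: "adj (Mt T g \<alpha>0) \<noteq> 0" by (rule adj_nz[OF g card r D1])
  obtain a v where v0: "v \<noteq> 0" and fv: "phi T \<alpha>0 v = 0" and a0': "a \<noteq> 0"
    and Aav: "\<And>q j. adj (Mt T g \<alpha>0) $ q $ j = a q * v j"
    using adj_rank1[OF g r D1 A0] by blast
  define \<gamma>a where "\<gamma>a = (\<lambda>k. a (inv g k))"
  have ginv: "inv g (g j) = j" for j using g by (simp add: bij_is_inj)
  define Pf where "Pf \<alpha> = phiT T \<alpha> \<gamma>a" for \<alpha>
  define Qf where "Qf \<alpha> = phi T \<alpha> v" for \<alpha>
  have Pf_M: "Pf \<alpha> j = (\<Sum>q\<in>UNIV. Mt T g \<alpha> $ j $ q * a q)" for \<alpha> j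
    by (simp add: Pf_def phiT_M[OF g] \<gamma>a_def ginv)
  have Qf_M: "Qf \<alpha> (g j') = (\<Sum>r\<in>UNIV. v r * Mt T g \<alpha> $ r $ j')" for \<alpha> j'
    by (simp add: Qf_def phi_M)
  have ent: "(Mt T g \<alpha>1 ** adj (Mt T g \<alpha>0) ** Mt T g \<alpha>3) $ j $ j' = Pf \<alpha>1 j * Qf \<alpha>3 (g j')" for \<alpha>1 \<alpha>3 j j'
  proof -
    have "(Mt T g \<alpha>1 ** adj (Mt T g \<alpha>0) ** Mt T g \<alpha>3) $ j $ j'
        = (\<Sum>r\<in>UNIV. (\<Sum>q\<in>UNIV. Mt T g \<alpha>1 $ j $ q * (a q * v r)) * Mt T g \<alpha>3 $ r $ j')"
      by (simp add: matrix_matrix_mult_def Aav)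
    also have "\<dots> = (\<Sum>r\<in>UNIV. (\<Sum>q\<in>UNIV. Mt T g \<alpha>1 $ j $ q * a q) * (v r * Mt T g \<alpha>3 $ r $ j'))"
      by (intro sum.cong refl) (simp add: sum_distrib_left sum_distrib_right mult_ac)
    also have "\<dots> = Pf \<alpha>1 j * Qf \<alpha>3 (g j')"
      by (simp add: Pf_M Qf_M sum_distrib_left)
    finally show ?thesis .
  qed
  have ident: "Pf \<alpha>1 j * Qf \<alpha>3 k = Pf \<alpha>3 j * Qf \<alpha>1 k" for \<alpha>1 \<alpha>3 j k
  proof -
    obtain j' where k: "k = g j'" using g by (metis bij_pointE)
    have "(Mt T g \<alpha>1 ** adj (Mt T g \<alpha>0) ** Mt T g \<alpha>3) $ j $ j' = (Mt T g \<alpha>3 ** adj (Mt T g \<alpha>0) ** Mt T g \<alpha>1) $ j $ j'"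
      using border_strassen[OF brl] by simp
    then show ?thesis unfolding ent k .
  qed
  have Padd: "Pf (\<lambda>i. \<alpha> i + \<alpha>' i) = Pf \<alpha> + Pf \<alpha>'" for \<alpha> \<alpha>'
    using phiT_add_alpha[of T \<alpha> 1 \<alpha>' \<gamma>a] by (simp add: Pf_def fun_eq_iff)
  have Qadd: "Qf (\<lambda>i. \<alpha> i + \<alpha>' i) = Qf \<alpha> + Qf \<alpha>'" for \<alpha> \<alpha>'
    using phi_add_alpha[of T \<alpha> 1 \<alpha>' v] by (simp add: Qf_def fun_eq_iff)
  have conc2: "inj (\<lambda>\<beta>::'b \<Rightarrow> complex. \<lambda>i k. \<Sum>j\<in>UNIV. \<beta> j * T i j k)"
    and conc3: "inj (\<lambda>\<gamma>::'c \<Rightarrow> complex. \<lambda>i j. \<Sum>k\<in>UNIV. \<gamma> k * T i j k)"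
    using assms(3) unfolding concise_def by auto
  have notQ: "\<exists>\<alpha>. Qf \<alpha> \<noteq> 0"
  proof (rule ccontr)
    assume "\<nexists>\<alpha>. Qf \<alpha> \<noteq> 0"
    then have "Qf (dlt i) k = 0" for i k by auto
    then have "(\<lambda>i k. \<Sum>j\<in>UNIV. v j * T i j k) = (\<lambda>i k. \<Sum>j\<in>UNIV. (0::'b \<Rightarrow> complex) j * T i j k)"
      by (simp add: Qf_def phi_dlt fun_eq_iff)
    then have "v = 0" by (rule injD[OF conc2])
    then show False using v0 by simp
  qed
  have notP: "\<exists>\<alpha>. Pf \<alpha> \<noteq> 0"
  proof (rule ccontr)
    assume "\<nexists>\<alpha>. Pf \<alpha> \<noteq> 0"
    then have "Pf (dlt i) j = 0" for i j by auto
    then have "(\<lambda>i j. \<Sum>k\<in>UNIV. \<gamma>a k * T i j k) = (\<lambda>i j. \<Sum>k\<in>UNIV. (0::'c \<Rightarrow> complex) k * T i j k)"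
      by (simp add: Pf_def phiT_dlt fun_eq_iff)
    then have "\<gamma>a = 0" by (rule injD[OF conc3])
    moreover obtain q where "a q \<noteq> 0" using a0' by (auto simp: fun_eq_iff)
    moreover have "\<gamma>a (g q) = a q" by (simp add: \<gamma>a_def ginv)
    ultimately show False by simp
  qed
  obtain \<alpha>1 where P1: "Pf \<alpha>1 \<noteq> 0" and Q1: "Qf \<alpha>1 \<noteq> 0"
  proof -
    obtain \<alpha>q where Qq: "Qf \<alpha>q \<noteq> 0" using notQ by blast
    obtain \<alpha>p where Pp: "Pf \<alpha>p \<noteq> 0" using notP by blast
    consider "Pf \<alpha>q \<noteq> 0" | "Qf \<alpha>p \<noteq> 0" | "Pf \<alpha>q = 0" "Qf \<alpha>p = 0" by blast
    then show ?thesis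
    proof cases
      case 1 then show ?thesis using that Qq by blast
    next
      case 2 then show ?thesis using that Pp by blast
    next
      case 3
      have "Pf (\<lambda>i. \<alpha>q i + \<alpha>p i) \<noteq> 0" using 3 Pp by (simp add: Padd)
      moreover have "Qf (\<lambda>i. \<alpha>q i + \<alpha>p i) \<noteq> 0" using 3 Qq by (simp add: Qadd)
      ultimately show ?thesis using that by blast
    qed
  qed
  obtain j1 where j1: "Pf \<alpha>1 j1 \<noteq> 0" using P1 by (auto simp: fun_eq_iff)
  obtain k0 where k0: "Qf \<alpha>1 k0 \<noteq> 0" using Q1 by (auto simp: fun_eq_iff)
  obtain p0 where p0: "v p0 \<noteq> 0" using v0 by (auto simp: fun_eq_iff)
  define x where "x \<alpha> = Pf \<alpha> j1 / Pf \<alpha>1 j1" for \<alpha>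
  have xl: "phi T \<alpha> v = cscale (x \<alpha>) (Qf \<alpha>1)" for \<alpha>
  proof
    fix k
    have "Pf \<alpha> j1 * Qf \<alpha>1 k = Pf \<alpha>1 j1 * Qf \<alpha> k" by (rule ident)
    then show "phi T \<alpha> v k = cscale (x \<alpha>) (Qf \<alpha>1) k"
      using j1 by (simp add: x_def Qf_def field_simps)
  qed
  have x1: "x \<alpha>1 \<noteq> 0" using j1 by (simp add: x_def)
  have rk: "rank_on (phiT T \<alpha>) {\<gamma>. sf (Qf \<alpha>1) \<gamma> = 0} \<le> CARD('b) - 1 - 1" for \<alpha>
    by (rule imprim_from_line[OF g card D1 p0 k0 xl x1])
  have "hyperplane {\<gamma>. sf (Qf \<alpha>1) \<gamma> = 0}" by (rule hyperplane_sf[of "Qf \<alpha>1" k0, OF k0])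
  then have "imprimitive T (CARD('b) - 1)"
    unfolding imprimitive_def using rk by blast
  then show False using nimp by simp
qed


end
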